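(* Let $\lambda_1>\lambda_2=\lambda_3>0$, $D=\mathrm{diag}(\lambda_1,\lambda_2,\lambda_2)$, and $G=\widetilde W_{1,0}(\cdot;D)\circ\mathbf P:S^3\to\mathbb R$. Then: (i) The global maxima of $G$ are the points $(0,0,\pm1,0)$, $(0,0,0,\pm1)$ and $(0,0,\cos\alpha,\sin\alpha)$, $\alpha\in[0,2\pi)$; correspondingly the rotations $\mathrm{diag}(-1,1,-1)$, $\mathrm{diag}(-1,-1,1)$ and $$\begin{pmatrix}-1&0&0\\0&\cos2\alpha&\sin2\alpha\\0&\sin2\alpha&-\cos2\alpha\end{pmatrix},\ \alpha\in[0,2\pi),$$ are the global maxima of $\widetilde W_{1,0}(\cdot;D)$ on $SO(3)$. (ii) If $s=\lambda_1+\lambda_2>2$, then, with $a=\sqrt{\frac12+\frac1s}$, $b=\sqrt{\frac12-\frac1s}$, the global minima of $G$ are the points $(\pm a,0,0,\pm b)$, $(\pm a,0,\pm b,0)$ (all sign combinations) and $(\pm a,0,b\cos\alpha,b\sin\alpha)$, $\alpha\in[0,2\pi)$; the corresponding rotations $\mathbf P(q)$ are the global minima of $\widetilde W_{1,0}(\cdot;D)$ on $SO(3)$, with minimal value $(\lambda_2-1)^2+\frac12(\lambda_1-\lambda_2)^2$. (iii) If $\lambda_1+\lambda_2\le2$, then $(\pm1,0,0,0)$ are the only global minima of $G$, and $\mathbb I_3$ is the global minimum of $\widetilde W_{1,0}(\cdot;D)$.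
   Context: $\mathrm{sym}(Y)=\tfrac12(Y+Y^T)$, $\|Y\|^2=\mathrm{tr}(Y^TY)$. $\widetilde W_{1,0}(R;D)=\|\mathrm{sym}(R^TD-\mathbb I_3)\|^2$ for $R\in SO(3)$. $S^3\subset\mathbb R^4$ is the unit sphere and $\mathbf P:S^3\to SO(3)$ is $$\mathbf P(q)=\begin{pmatrix}(q^0)^2+(q^1)^2-(q^2)^2-(q^3)^2 & 2(q^1q^2-q^0q^3) & 2(q^1q^3+q^0q^2)\\ 2(q^1q^2+q^0q^3) & (q^0)^2-(q^1)^2+(q^2)^2-(q^3)^2 & 2(q^2q^3-q^0q^1)\\ 2(q^1q^3-q^0q^2) & 2(q^2q^3+q^0q^1) & (q^0)^2-(q^1)^2-(q^2)^2+(q^3)^2\end{pmatrix},$$ for $q=(q^0,q^1,q^2,q^3)\in S^3$. *)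

theory Defs
  imports "HOL-Analysis.Analysis"
begin

type_synonym mat3 = "real^3^3"

definition SO3 :: "mat3 set" where
  "SO3 = {R. transpose R ** R = mat 1 \<and> det R = 1}"

definition msym :: "mat3 \<Rightarrow> mat3" where
  "msym Y = (1/2) *\<^sub>R (Y + transpose Y)"

definition frob_sq :: "mat3 \<Rightarrow> real" where
  "frob_sq Y = trace (transpose Y ** Y)"

definition W10 :: "mat3 \<Rightarrow> mat3 \<Rightarrow> real" where
  "W10 D R = frob_sq (msym (transpose R ** D - mat 1))"

definition diag3 :: "real \<Rightarrow> real \<Rightarrow> real \<Rightarrow> mat3" where
  "diag3 a b c = vector [vector [a,0,0], vector [0,b,0], vector [0,0,c]]"

definition S3 :: "(real \<times> real \<times> real \<times> real) set" where
  "S3 = {(q0,q1,q2,q3). q0^2 + q1^2 + q2^2 + q3^2 = 1}"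

fun quatP :: "real \<times> real \<times> real \<times> real \<Rightarrow> mat3" where
  "quatP (q0,q1,q2,q3) = vector [
     vector [q0^2 + q1^2 - q2^2 - q3^2, 2*(q1*q2 - q0*q3), 2*(q1*q3 + q0*q2)],
     vector [2*(q1*q2 + q0*q3), q0^2 - q1^2 + q2^2 - q3^2, 2*(q2*q3 - q0*q1)],
     vector [2*(q1*q3 - q0*q2), 2*(q2*q3 + q0*q1), q0^2 - q1^2 - q2^2 + q3^2]]"

definition argmax_on :: "'a set \<Rightarrow> ('a \<Rightarrow> real) \<Rightarrow> 'a set" where
  "argmax_on S f = {x \<in> S. \<forall>y\<in>S. f y \<le> f x}"

definition argmin_on :: "'a set \<Rightarrow> ('a \<Rightarrow> real) \<Rightarrow> 'a set" where
  "argmin_on S f = {x \<in> S. \<forall>y\<in>S. f x \<le> f y}"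

end

theory Submission
  imports Defs
begin

lemma W10_diag:
  "W10 (diag3 a b c) R =
    (a*R$1$1 - 1)^2 + (b*R$2$2 - 1)^2 + (c*R$3$3 - 1)^2
    + 2*((a*R$1$2 + b*R$2$1)/2)^2 + 2*((a*R$1$3 + c*R$3$1)/2)^2 + 2*((b*R$2$3 + c*R$3$2)/2)^2"
  unfolding W10_def frob_sq_def msym_def trace_def diag3_def
  apply (simp add: sum_3 matrix_matrix_mult_def transpose_def mat_def power2_eq_square algebra_simps)
  apply (simp add: field_simps)
  done

lemma mat3_eq: "(A::mat3) = B \<longleftrightarrow> (\<forall>i j. A$i$j = B$i$j)"
  by (simp add: vec_eq_iff)

lemma mat3_eq9: "(A::mat3) = B \<longleftrightarrow>
  A$1$1 = B$1$1 \<and> A$1$2 = B$1$2 \<and> A$1$3 = B$1$3 \<and>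
  A$2$1 = B$2$1 \<and> A$2$2 = B$2$2 \<and> A$2$3 = B$2$3 \<and>
  A$3$1 = B$3$1 \<and> A$3$2 = B$3$2 \<and> A$3$3 = B$3$3"
  unfolding mat3_eq forall_3 by blast

lemma quatP_SO3:
  fixes q0 q1 q2 q3 :: real
  assumes "q0^2 + q1^2 + q2^2 + q3^2 = 1"
  shows "quatP (q0,q1,q2,q3) \<in> SO3"
  unfolding SO3_def mem_Collect_eq
proof
  show "transpose (quatP (q0, q1, q2, q3)) ** quatP (q0, q1, q2, q3) = mat 1"
    unfolding mat3_eq9 using assms
    by (simp add: matrix_matrix_mult_def transpose_def mat_def sum_3; algebra)
  show "det (quatP (q0, q1, q2, q3)) = 1"
    unfolding det_3 using assms by simp algebra
qed


lemma G_formula: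
  fixes q0 q1 q2 q3 L d :: real
  assumes "q0^2 + q1^2 + q2^2 + q3^2 = 1"
  shows "W10 (diag3 (L+d) L L) (quatP (q0,q1,q2,q3)) =
     ((2*L+d)*(2*q0^2-1) + 2*d*q1^2 - 2)^2/2 + 4*L*d*q1^2 + (L-1)^2 + d^2/2"
  unfolding W10_diag using assms
  apply simp
  by algebra

definition isq :: "real \<Rightarrow> real \<Rightarrow> real \<Rightarrow> real \<Rightarrow> real \<Rightarrow> real \<Rightarrow> real \<Rightarrow> real \<Rightarrow> real \<Rightarrow> real \<Rightarrow> real \<Rightarrow> real \<Rightarrow> real \<Rightarrow> bool" where
 "isq a b c d e f g h i q0 q1 q2 q3 \<longleftrightarrow> q0^2+q1^2+q2^2+q3^2 = 1 \<and> a = q0^2+q1^2-q2^2-q3^2 \<and> b = 2*(q1*q2 - q0*q3) \<and> c = 2*(q1*q3 + q0*q2) \<and> d = 2*(q1*q2 + q0*q3) \<and> e = q0^2 - q1^2 + q2^2 - q3^2 \<and> f = 2*(q2*q3 - q0*q1) \<and> g = 2*(q1*q3 - q0*q2) \<and> h = 2*(q2*q3 + q0*q1) \<and> i = q0^2 - q1^2 - q2^2 + q3^2"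

locale rot9 =
  fixes a b c d e f g h i :: real
  assumes r1: "a*a+b*b+c*c = 1" and r2: "d*d+e*e+f*f = 1" and r3: "g*g+h*h+i*i = 1"
    and r12: "a*d+b*e+c*f = 0" and r13: "a*g+b*h+c*i = 0" and r23: "d*g+e*h+f*i = 0"
    and c1: "a*a+d*d+g*g = 1" and c2: "b*b+e*e+h*h = 1" and c3: "c*c+f*f+i*i = 1"
    and c12: "a*b+d*e+g*h = 0" and c13: "a*c+d*f+g*i = 0" and c23: "b*c+e*f+h*i = 0"
    and x1: "a = e*i - f*h" and x2: "b = f*g - d*i" and x3: "c = d*h - e*g"
    and x4: "d = h*c - i*b" and x5: "e = i*a - g*c" and x6: "f = g*b - h*a"
    and x7: "g = b*f - c*e" and x8: "h = c*d - a*f" and x9: "i = a*e - b*d"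
begin

lemmas hyps = r1 r2 r3 r12 r13 r23 c1 c2 c3 c12 c13 c23 x1 x2 x3 x4 x5 x6 x7 x8 x9

lemma id1: "(h-f)^2 = (1+a+e+i)*(1+a-e-i)" using hyps by algebra
lemma id2: "(c-g)^2 = (1+a+e+i)*(1-a+e-i)" using hyps by algebra
lemma id3: "(d-b)^2 = (1+a+e+i)*(1-a-e+i)" using hyps by algebra
lemma id4: "(h-f)*(c-g) = (1+a+e+i)*(b+d)" using hyps by algebra
lemma id5: "(h-f)*(d-b) = (1+a+e+i)*(c+g)" using hyps by algebra
lemma id6: "(c-g)*(d-b) = (1+a+e+i)*(f+h)" using hyps by algebra

lemma pos_case:
  assumes tpos: "1+a+e+i > 0"
  shows "\<exists>q0 q1 q2 q3. isq a b c d e f g h i q0 q1 q2 q3"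
proof -
  define t where "t = 1+a+e+i"
  have t: "t > 0" using tpos t_def by simp
  define q0 where "q0 = sqrt t / 2"
  have q0p: "q0 > 0" using t by (simp add: q0_def)
  have q00: "q0^2 = t/4" using t by (simp add: q0_def power_divide)
  define q1 where "q1 = (h-f)/(4*q0)"
  define q2 where "q2 = (c-g)/(4*q0)"
  define q3 where "q3 = (d-b)/(4*q0)"
  have q01: "q0*q1 = (h-f)/4" using q0p q1_def by simp
  have q02: "q0*q2 = (c-g)/4" using q0p q2_def by simp
  have q03: "q0*q3 = (d-b)/4" using q0p q3_def by simp
  have sq: "\<And>x y. (x/(4*q0))*(y/(4*q0)) = x*y/(4*t)"
    using q00 q0p by (simp add: field_simps power2_eq_square) 
  have q11: "q1^2 = (1+a-e-i)/4"
  proof -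
    have "(h-f)*(h-f) = t*(1+a-e-i)" using id1 unfolding t_def power2_eq_square .
    then show ?thesis using t unfolding power2_eq_square q1_def sq by simp
  qed
  have q22: "q2^2 = (1-a+e-i)/4"
  proof -
    have "(c-g)*(c-g) = t*(1-a+e-i)" using id2 unfolding t_def power2_eq_square .
    then show ?thesis using t unfolding power2_eq_square q2_def sq by simp
  qed
  have q33: "q3^2 = (1-a-e+i)/4"
  proof -
    have "(d-b)*(d-b) = t*(1-a-e+i)" using id3 unfolding t_def power2_eq_square .
    then show ?thesis using t unfolding power2_eq_square q3_def sq by simp
  qed
  have q12: "q1*q2 = (b+d)/4"
  proof -
    have "(h-f)*(c-g) = t*(b+d)" using id4 unfolding t_def .
    then show ?thesis using t unfolding q1_def q2_def sq by simp
  qed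
  have q13: "q1*q3 = (c+g)/4"
  proof -
    have "(h-f)*(d-b) = t*(c+g)" using id5 unfolding t_def .
    then show ?thesis using t unfolding q1_def q3_def sq by simp
  qed
  have q23: "q2*q3 = (f+h)/4"
  proof -
    have "(c-g)*(d-b) = t*(f+h)" using id6 unfolding t_def .
    then show ?thesis using t unfolding q2_def q3_def sq by simp
  qed
  have "isq a b c d e f g h i q0 q1 q2 q3"
    unfolding isq_def q00 q11 q22 q33 q12 q13 q23 q01 q02 q03 t_def by (simp add: field_simps)
  then show ?thesis by blast
qed

lemma all_cases: "\<exists>q0 q1 q2 q3. isq a b c d e f g h i q0 q1 q2 q3"
proof -
  have "(1+a+e+i) + (1+a-e-i) + (1-a+e-i) + (1-a-e+i) = 4" by simp
  then consider "1+a+e+i > 0" | "1+a-e-i > 0" | "1-a+e-i > 0" | "1-a-e+i > 0" by linarith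
  then show ?thesis
  proof cases
    case 1 then show ?thesis by (rule pos_case)
  next
    case 2
    interpret A: rot9 a "-b" "-c" d "-e" "-f" g "-h" "-i"
      by (unfold_locales; (simp only: mult_minus_left mult_minus_right minus_minus)?; insert hyps; linarith)
    obtain p0 p1 p2 p3 where p: "isq a (-b) (-c) d (-e) (-f) g (-h) (-i) p0 p1 p2 p3"
      using A.pos_case 2 by auto
    have "isq a b c d e f g h i (-p1) p0 p3 (-p2)"
      using p unfolding isq_def by (simp add: algebra_simps)
    then show ?thesis by blast
  next
    case 3
    interpret A: rot9 "-a" b "-c" "-d" e "-f" "-g" h "-i"
      by (unfold_locales; (simp only: mult_minus_left mult_minus_right minus_minus)?; insert hyps; linarith)
    obtain p0 p1 p2 p3 where p: "isq (-a) b (-c) (-d) e (-f) (-g) h (-i) p0 p1 p2 p3"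
      using A.pos_case 3 by auto
    have "isq a b c d e f g h i (-p2) (-p3) p0 p1"
      using p unfolding isq_def by (simp add: algebra_simps)
    then show ?thesis by blast
  next
    case 4
    interpret A: rot9 "-a" "-b" c "-d" "-e" f "-g" "-h" i
      by (unfold_locales; (simp only: mult_minus_left mult_minus_right minus_minus)?; insert hyps; linarith)
    obtain p0 p1 p2 p3 where p: "isq (-a) (-b) c (-d) (-e) f (-g) (-h) i p0 p1 p2 p3"
      using A.pos_case 4 by auto
    have "isq a b c d e f g h i (-p3) p2 (-p1) p0"
      using p unfolding isq_def by (simp add: algebra_simps)
    then show ?thesis by blast
  qed
qed

end

lemma sq3: "(x::real)^2+y^2+z^2 = 0 \<Longrightarrow> x=0 \<and> y=0 \<and> z=0"
  by (smt (verit) power2_less_eq_zero_iff zero_le_power2)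

lemma SO3_rot9:
  assumes R: "R \<in> SO3"
  shows "rot9 (R$1$1) (R$1$2) (R$1$3) (R$2$1) (R$2$2) (R$2$3) (R$3$1) (R$3$2) (R$3$3)"
proof -
  have A: "transpose R ** R = mat 1" and D: "det R = 1" using R unfolding SO3_def by auto
  have B: "R ** transpose R = mat 1" using A orthogonal_matrix orthogonal_matrix_def by blast
  note cols = A[unfolded mat3_eq9, simplified matrix_matrix_mult_def transpose_def mat_def sum_3, simplified]
  note rows = B[unfolded mat3_eq9, simplified matrix_matrix_mult_def transpose_def mat_def sum_3, simplified]
  note dd = D[unfolded det_3]
  define a where "a = R$1$1" define b where "b = R$1$2" define c where "c = R$1$3"
  define d where "d = R$2$1" define e where "e = R$2$2" define f where "f = R$2$3"
  define g where "g = R$3$1" define h where "h = R$3$2" define i where "i = R$3$3"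
  note defs = a_def b_def c_def d_def e_def f_def g_def h_def i_def
  have cc: "a*a+d*d+g*g = 1" "b*b+e*e+h*h = 1" "c*c+f*f+i*i = 1"
     "a*b+d*e+g*h = 0" "a*c+d*f+g*i = 0" "b*c+e*f+h*i = 0"
    using cols unfolding defs by (simp_all add: algebra_simps)
  have rr: "a*a+b*b+c*c = 1" "d*d+e*e+f*f = 1" "g*g+h*h+i*i = 1"
     "a*d+b*e+c*f = 0" "a*g+b*h+c*i = 0" "d*g+e*h+f*i = 0"
    using rows unfolding defs by (simp_all add: algebra_simps)
  have det: "a*e*i + b*f*g + c*d*h - a*f*h - b*d*i - c*e*g = 1"
    using dd unfolding defs by (simp add: algebra_simps)
  have "(g - (b*f-c*e))^2 + (h - (c*d-a*f))^2 + (i - (a*e-b*d))^2 =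
     (g*g+h*h+i*i) - 2*(a*e*i + b*f*g + c*d*h - a*f*h - b*d*i - c*e*g) + (a*a+b*b+c*c)*(d*d+e*e+f*f) - (a*d+b*e+c*f)^2"
    by algebra
  then have "(g - (b*f-c*e))^2 + (h - (c*d-a*f))^2 + (i - (a*e-b*d))^2 = 0"
    using rr det by simp
  then have "g - (b*f-c*e) = 0 \<and> h - (c*d-a*f) = 0 \<and> i - (a*e-b*d) = 0" by (rule sq3)
  then have X3: "g = b*f - c*e" "h = c*d - a*f" "i = a*e - b*d" unfolding right_minus_eq by blast+
  have "(a - (e*i-f*h))^2 + (b - (f*g-d*i))^2 + (c - (d*h-e*g))^2 =
     (a*a+b*b+c*c) - 2*(a*e*i + b*f*g + c*d*h - a*f*h - b*d*i - c*e*g) + (d*d+e*e+f*f)*(g*g+h*h+i*i) - (d*g+e*h+f*i)^2"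
    by algebra
  then have "(a - (e*i-f*h))^2 + (b - (f*g-d*i))^2 + (c - (d*h-e*g))^2 = 0"
    using rr det by simp
  then have "a - (e*i-f*h) = 0 \<and> b - (f*g-d*i) = 0 \<and> c - (d*h-e*g) = 0" by (rule sq3)
  then have X1: "a = e*i - f*h" "b = f*g - d*i" "c = d*h - e*g" unfolding right_minus_eq by blast+
  have "(d - (h*c-i*b))^2 + (e - (i*a-g*c))^2 + (f - (g*b-h*a))^2 =
     (d*d+e*e+f*f) - 2*(a*e*i + b*f*g + c*d*h - a*f*h - b*d*i - c*e*g) + (g*g+h*h+i*i)*(a*a+b*b+c*c) - (a*g+b*h+c*i)^2"
    by algebra
  then have "(d - (h*c-i*b))^2 + (e - (i*a-g*c))^2 + (f - (g*b-h*a))^2 = 0"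
    using rr det by simp
  then have "d - (h*c-i*b) = 0 \<and> e - (i*a-g*c) = 0 \<and> f - (g*b-h*a) = 0" by (rule sq3)
  then have X2: "d = h*c - i*b" "e = i*a - g*c" "f = g*b - h*a" unfolding right_minus_eq by blast+
  have "rot9 a b c d e f g h i"
    by (unfold_locales; (fact rr cc X1 X2 X3)?)
  then show ?thesis unfolding defs .
qed

lemma quatP_surj:
  assumes R: "R \<in> SO3"
  shows "\<exists>q\<in>S3. quatP q = R"
proof -
  interpret rot9 "R$1$1" "R$1$2" "R$1$3" "R$2$1" "R$2$2" "R$2$3" "R$3$1" "R$3$2" "R$3$3"
    by (rule SO3_rot9[OF R])
  obtain q0 q1 q2 q3 where q: "isq (R$1$1) (R$1$2) (R$1$3) (R$2$1) (R$2$2) (R$2$3) (R$3$1) (R$3$2) (R$3$3) q0 q1 q2 q3"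
    using all_cases by blast
  have "(q0,q1,q2,q3) \<in> S3" "quatP (q0,q1,q2,q3) = R"
    using q unfolding isq_def S3_def mat3_eq9 by auto
  then show ?thesis by blast
qed

declare quatP.simps[simp del]

lemma argmax_transfer:
  assumes "f ` A = B"
  shows "argmax_on B g = f ` argmax_on A (\<lambda>q. g (f q))"
  using assms unfolding argmax_on_def by blast

lemma argmin_transfer:
  assumes "f ` A = B"
  shows "argmin_on B g = f ` argmin_on A (\<lambda>q. g (f q))"
  using assms unfolding argmin_on_def by blast

lemma quatP_image: "quatP ` S3 = SO3"
proof
  show "quatP ` S3 \<subseteq> SO3" unfolding S3_def using quatP_SO3 by auto
  show "SO3 \<subseteq> quatP ` S3" using quatP_surj by blast
qed

lemma S3_iff: "(q0,q1,q2,q3) \<in> S3 \<longleftrightarrow> q0^2+q1^2+q2^2+q3^2 = 1"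
  unfolding S3_def by simp

context
  fixes l1 l2 :: real
  assumes l12: "l1 > l2" and l2p: "l2 > 0"
begin

lemma Gq:
  assumes "q0^2+q1^2+q2^2+q3^2 = 1"
  shows "W10 (diag3 l1 l2 l2) (quatP (q0,q1,q2,q3)) =
     ((l1+l2)*(2*q0^2-1) + 2*(l1-l2)*q1^2 - 2)^2/2 + 4*l2*(l1-l2)*q1^2 + (l2-1)^2 + (l1-l2)^2/2"
  using G_formula[OF assms, of l2 "l1-l2"] by (simp add: algebra_simps)

definition "Mx = ((l1+l2)+2)^2/2 + (l2-1)^2 + (l1-l2)^2/2"

lemma Gmax_diff:
  assumes "q0^2+q1^2+q2^2+q3^2 = 1"
  shows "Mx - W10 (diag3 l1 l2 l2) (quatP (q0,q1,q2,q3)) =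
    2*(2*l2)^2*q0^2*q1^2 + 2*(l1+l2)^2*q0^2*(q2^2+q3^2) + 2*(l1-l2)^2*q1^2*(q2^2+q3^2)
    + 4*(l1+l2)*q0^2 + 4*(l1-l2)*q1^2"
proof -
  have aux: "((l1+l2)+2)^2/2 + (l2-1)^2 + (l1-l2)^2/2 -
     (((l1+l2)*(2*(1 - Y - Z)-1) + 2*(l1-l2)*Y - 2)^2/2 + 4*l2*(l1-l2)*Y + (l2-1)^2 + (l1-l2)^2/2) =
     2*(2*l2)^2*(1 - Y - Z)*Y + 2*(l1+l2)^2*(1 - Y - Z)*Z + 2*(l1-l2)^2*Y*Z + 4*(l1+l2)*(1 - Y - Z) + 4*(l1-l2)*Y" for Y Z :: real
    by (simp add: field_simps power2_eq_square)
  have e: "q0^2 = 1 - q1^2 - (q2^2+q3^2)" using assms by simp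
  show ?thesis unfolding Gq[OF assms] Mx_def e using aux[of "q1^2" "q2^2+q3^2"] by (simp add: mult.assoc)
qed

lemma Gmax_le:
  assumes "q0^2+q1^2+q2^2+q3^2 = 1"
  shows "W10 (diag3 l1 l2 l2) (quatP (q0,q1,q2,q3)) \<le> Mx"
    and "W10 (diag3 l1 l2 l2) (quatP (q0,q1,q2,q3)) = Mx \<longleftrightarrow> q0 = 0 \<and> q1 = 0"
proof -
  have s: "l1 + l2 > 0" "l1 - l2 > 0" using l12 l2p by auto
  note D = Gmax_diff[OF assms]
  have t: "2*(2*l2)^2*q0^2*q1^2 \<ge> 0" "2*(l1+l2)^2*q0^2*(q2^2+q3^2) \<ge> 0"
     "2*(l1-l2)^2*q1^2*(q2^2+q3^2) \<ge> 0" "4*(l1+l2)*q0^2 \<ge> 0" "4*(l1-l2)*q1^2 \<ge> 0"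
    using s by (simp_all add: zero_le_mult_iff)
  then show "W10 (diag3 l1 l2 l2) (quatP (q0,q1,q2,q3)) \<le> Mx" using D by linarith
  show "W10 (diag3 l1 l2 l2) (quatP (q0,q1,q2,q3)) = Mx \<longleftrightarrow> q0 = 0 \<and> q1 = 0"
  proof
    assume "W10 (diag3 l1 l2 l2) (quatP (q0,q1,q2,q3)) = Mx"
    then have "4*(l1+l2)*q0^2 = 0" "4*(l1-l2)*q1^2 = 0" using D t by linarith+
    then show "q0 = 0 \<and> q1 = 0" using s by simp
  next
    assume "q0 = 0 \<and> q1 = 0" then show "W10 (diag3 l1 l2 l2) (quatP (q0,q1,q2,q3)) = Mx"
      using D by simp
  qed
qed

lemma argmax_S3:
  "argmax_on S3 (\<lambda>q. W10 (diag3 l1 l2 l2) (quatP q)) = {(q0,q1,q2,q3). q0^2+q1^2+q2^2+q3^2 = 1 \<and> q0 = 0 \<and> q1 = 0}"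
proof -
  have "(q0,q1,q2,q3) \<in> argmax_on S3 (\<lambda>q. W10 (diag3 l1 l2 l2) (quatP q)) \<longleftrightarrow>
        q0^2+q1^2+q2^2+q3^2 = 1 \<and> q0 = 0 \<and> q1 = 0" for q0 q1 q2 q3
  proof
    assume A: "(q0,q1,q2,q3) \<in> argmax_on S3 (\<lambda>q. W10 (diag3 l1 l2 l2) (quatP q))"
    then have sp: "q0^2+q1^2+q2^2+q3^2 = 1" unfolding argmax_on_def by (auto simp: S3_iff)
    have "(0::real,0::real,1::real,0::real) \<in> S3" unfolding S3_iff by simp
    then have "W10 (diag3 l1 l2 l2) (quatP (0,0,1,0)) \<le> W10 (diag3 l1 l2 l2) (quatP (q0,q1,q2,q3))"
      using A unfolding argmax_on_def by auto
    moreover have "W10 (diag3 l1 l2 l2) (quatP (0,0,1,0)) = Mx" using Gmax_le(2)[of 0 0 1 0] by simp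
    ultimately have "W10 (diag3 l1 l2 l2) (quatP (q0,q1,q2,q3)) = Mx" using Gmax_le(1)[OF sp] by linarith
    then show "q0^2+q1^2+q2^2+q3^2 = 1 \<and> q0 = 0 \<and> q1 = 0" using Gmax_le(2)[OF sp] sp by simp
  next
    assume B: "q0^2+q1^2+q2^2+q3^2 = 1 \<and> q0 = 0 \<and> q1 = 0"
    then have "W10 (diag3 l1 l2 l2) (quatP (q0,q1,q2,q3)) = Mx" using Gmax_le(2) by blast
    then show "(q0,q1,q2,q3) \<in> argmax_on S3 (\<lambda>q. W10 (diag3 l1 l2 l2) (quatP q))"
      using B Gmax_le(1) unfolding argmax_on_def S3_def by auto
  qed
  then show ?thesis by auto
qed


lemma Gmin_ge:
  assumes "q0^2+q1^2+q2^2+q3^2 = 1"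
  shows "W10 (diag3 l1 l2 l2) (quatP (q0,q1,q2,q3)) \<ge> (l2-1)^2 + (l1-l2)^2/2"
    and "W10 (diag3 l1 l2 l2) (quatP (q0,q1,q2,q3)) = (l2-1)^2 + (l1-l2)^2/2 \<longleftrightarrow>
         q1 = 0 \<and> (l1+l2)*(2*q0^2-1) = 2"
proof -
  have s: "l2*(l1 - l2) > 0" using l12 l2p by auto
  have t: "4*l2*(l1-l2)*q1^2 \<ge> 0" using s by simp
  note D = Gq[OF assms]
  show "W10 (diag3 l1 l2 l2) (quatP (q0,q1,q2,q3)) \<ge> (l2-1)^2 + (l1-l2)^2/2"
    unfolding D using t by simp
  show "W10 (diag3 l1 l2 l2) (quatP (q0,q1,q2,q3)) = (l2-1)^2 + (l1-l2)^2/2 \<longleftrightarrow>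
         q1 = 0 \<and> (l1+l2)*(2*q0^2-1) = 2"
  proof
    assume "W10 (diag3 l1 l2 l2) (quatP (q0,q1,q2,q3)) = (l2-1)^2 + (l1-l2)^2/2"
    then have E: "((l1+l2)*(2*q0^2-1) + 2*(l1-l2)*q1^2 - 2)^2/2 + 4*l2*(l1-l2)*q1^2 = 0"
      unfolding D by simp
    have "((l1+l2)*(2*q0^2-1) + 2*(l1-l2)*q1^2 - 2)^2/2 \<ge> 0" by simp
    then have "4*l2*(l1-l2)*q1^2 = 0" "((l1+l2)*(2*q0^2-1) + 2*(l1-l2)*q1^2 - 2)^2 = 0"
      using E t by linarith+
    then show "q1 = 0 \<and> (l1+l2)*(2*q0^2-1) = 2" using s by auto
  next
    assume "q1 = 0 \<and> (l1+l2)*(2*q0^2-1) = 2"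
    then show "W10 (diag3 l1 l2 l2) (quatP (q0,q1,q2,q3)) = (l2-1)^2 + (l1-l2)^2/2"
      unfolding D by simp
  qed
qed

lemma Gmin2_ge:
  assumes "q0^2+q1^2+q2^2+q3^2 = 1" and s2: "l1 + l2 \<le> 2"
  shows "W10 (diag3 l1 l2 l2) (quatP (q0,q1,q2,q3)) \<ge> (l1+l2-2)^2/2 + (l2-1)^2 + (l1-l2)^2/2"
    and "W10 (diag3 l1 l2 l2) (quatP (q0,q1,q2,q3)) = (l1+l2-2)^2/2 + (l2-1)^2 + (l1-l2)^2/2 \<longleftrightarrow>
         q1 = 0 \<and> q2 = 0 \<and> q3 = 0"
proof -
  have aux: "((l1+l2)*(2*(1 - Y - Z)-1) + 2*(l1-l2)*Y - 2)^2/2 + 4*l2*(l1-l2)*Y + (l2-1)^2 + (l1-l2)^2/2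
     - ((l1+l2-2)^2/2 + (l2-1)^2 + (l1-l2)^2/2) =
     (4*l2*Y + 2*(l1+l2)*Z)*(2-(l1+l2)) + (4*l2*Y + 2*(l1+l2)*Z)^2/2 + 4*l2*(l1-l2)*Y" for Y Z :: real
    by (simp add: field_simps power2_eq_square)
  have e: "q0^2 = 1 - q1^2 - (q2^2+q3^2)" using assms by simp
  have D: "W10 (diag3 l1 l2 l2) (quatP (q0,q1,q2,q3)) - ((l1+l2-2)^2/2 + (l2-1)^2 + (l1-l2)^2/2) =
     (4*l2*q1^2 + 2*(l1+l2)*(q2^2+q3^2))*(2-(l1+l2)) + (4*l2*q1^2 + 2*(l1+l2)*(q2^2+q3^2))^2/2 + 4*l2*(l1-l2)*q1^2"
    unfolding Gq[OF assms(1)] e using aux[of "q1^2" "q2^2+q3^2"] by simp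
  have p: "l2 > 0" "l1 + l2 > 0" "l1 - l2 > 0" using l12 l2p by auto
  have E0: "4*l2*q1^2 + 2*(l1+l2)*(q2^2+q3^2) \<ge> 0" using p by simp
  have t: "(4*l2*q1^2 + 2*(l1+l2)*(q2^2+q3^2))*(2-(l1+l2)) \<ge> 0"
    "(4*l2*q1^2 + 2*(l1+l2)*(q2^2+q3^2))^2/2 \<ge> 0" "4*l2*(l1-l2)*q1^2 \<ge> 0"
    using E0 s2 p by simp_all
  show "W10 (diag3 l1 l2 l2) (quatP (q0,q1,q2,q3)) \<ge> (l1+l2-2)^2/2 + (l2-1)^2 + (l1-l2)^2/2"
    using D t by linarith
  show "W10 (diag3 l1 l2 l2) (quatP (q0,q1,q2,q3)) = (l1+l2-2)^2/2 + (l2-1)^2 + (l1-l2)^2/2 \<longleftrightarrow>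
         q1 = 0 \<and> q2 = 0 \<and> q3 = 0"
  proof
    assume "W10 (diag3 l1 l2 l2) (quatP (q0,q1,q2,q3)) = (l1+l2-2)^2/2 + (l2-1)^2 + (l1-l2)^2/2"
    then have "(4*l2*q1^2 + 2*(l1+l2)*(q2^2+q3^2))^2/2 = 0" using D t by linarith
    then have z: "4*l2*q1^2 + 2*(l1+l2)*(q2^2+q3^2) = 0" by simp
    have "4*l2*q1^2 \<ge> 0" "2*(l1+l2)*(q2^2+q3^2) \<ge> 0" using p by simp_all
    then have "4*l2*q1^2 = 0" "2*(l1+l2)*(q2^2+q3^2) = 0" using z by linarith+
    then have "q1 = 0" "q2^2+q3^2 = 0" using p by auto
    then show "q1 = 0 \<and> q2 = 0 \<and> q3 = 0"
      by (simp add: add_nonneg_eq_0_iff)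
  next
    assume "q1 = 0 \<and> q2 = 0 \<and> q3 = 0"
    then show "W10 (diag3 l1 l2 l2) (quatP (q0,q1,q2,q3)) = (l1+l2-2)^2/2 + (l2-1)^2 + (l1-l2)^2/2"
      using D by simp
  qed
qed

end

lemma argmin_char:
  assumes "\<forall>y\<in>S. m \<le> G y" "x0 \<in> S" "G x0 = m"
  shows "argmin_on S G = {x\<in>S. G x = m}"
  using assms unfolding argmin_on_def by force

lemma P_e2: "quatP (0,0,1,0) = diag3 (-1) 1 (-1)" "quatP (0,0,-1,0) = diag3 (-1) 1 (-1)"
  "quatP (0,0,0,1) = diag3 (-1) (-1) 1" "quatP (0,0,0,-1) = diag3 (-1) (-1) 1"
  by (simp_all add: quatP.simps diag3_def)

lemma P_alpha: "quatP (0,0,cos x, sin x) = vector [vector [-1, 0, 0],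
                vector [0, cos (2*x), sin (2*x)],
                vector [0, sin (2*x), - cos (2*x)]]"
proof -
  have "cos x ^2 + sin x^2 = 1" by simp
  then show ?thesis unfolding quatP.simps mat3_eq9 cos_double sin_double
    by (simp add: algebra_simps) 
qed

lemma P_one: "quatP (1,0,0,0) = mat 1" "quatP (-1,0,0,0) = mat 1"
  unfolding mat3_eq9 by (simp_all add: quatP.simps mat_def)

lemma circle_set: "{(q0,q1,q2,q3). q0^2+q1^2+q2^2+q3^2 = 1 \<and> q0 = 0 \<and> q1 = 0} =
       {(0,0,1,0), (0,0,-1,0), (0,0,0,1), (0,0,0,-1)} \<union>
       {(0::real,0::real,cos \<alpha>, sin \<alpha>) | \<alpha>. 0 \<le> \<alpha> \<and> \<alpha> < 2*pi}"
proof (rule set_eqI)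
  fix q :: "real\<times>real\<times>real\<times>real"
  obtain q0 q1 q2 q3 where q: "q = (q0,q1,q2,q3)" by (cases q) auto
  show "q \<in> {(q0,q1,q2,q3). q0^2+q1^2+q2^2+q3^2 = 1 \<and> q0 = 0 \<and> q1 = 0} \<longleftrightarrow>
     q \<in> {(0,0,1,0), (0,0,-1,0), (0,0,0,1), (0,0,0,-1)} \<union>
       {(0::real,0::real,cos \<alpha>, sin \<alpha>) | \<alpha>. 0 \<le> \<alpha> \<and> \<alpha> < 2*pi}"
  proof
    assume "q \<in> {(q0,q1,q2,q3). q0^2+q1^2+q2^2+q3^2 = 1 \<and> q0 = 0 \<and> q1 = 0}"
    then have h: "q2^2+q3^2 = 1" "q0 = 0" "q1 = 0" using q by auto
    obtain t where "0 \<le> t" "t < 2*pi" "q2 = cos t" "q3 = sin t" using sincos_total_2pi[OF h(1)] by blast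
    then show "q \<in> {(0,0,1,0), (0,0,-1,0), (0,0,0,1), (0,0,0,-1)} \<union>
       {(0::real,0::real,cos \<alpha>, sin \<alpha>) | \<alpha>. 0 \<le> \<alpha> \<and> \<alpha> < 2*pi}" using q h by blast
  next
    assume "q \<in> {(0,0,1,0), (0,0,-1,0), (0,0,0,1), (0,0,0,-1)} \<union>
       {(0::real,0::real,cos \<alpha>, sin \<alpha>) | \<alpha>. 0 \<le> \<alpha> \<and> \<alpha> < 2*pi}"
    then show "q \<in> {(q0,q1,q2,q3). q0^2+q1^2+q2^2+q3^2 = 1 \<and> q0 = 0 \<and> q1 = 0}" by auto
  qed
qed

lemma circle_image: "quatP ` ({(0,0,1,0), (0,0,-1,0), (0,0,0,1), (0,0,0,-1)} \<union>
       {(0,0,cos \<alpha>, sin \<alpha>) | \<alpha>. 0 \<le> \<alpha> \<and> \<alpha> < 2*pi}) =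
       {diag3 (-1) 1 (-1), diag3 (-1) (-1) 1} \<union>
       {vector [vector [-1, 0, 0],
                vector [0, cos (2*\<alpha>), sin (2*\<alpha>)],
                vector [0, sin (2*\<alpha>), - cos (2*\<alpha>)]] | \<alpha>. 0 \<le> \<alpha> \<and> \<alpha> < 2*pi}"
proof -
  have C: "quatP ` {(0,0,cos \<alpha>, sin \<alpha>) | \<alpha>. 0 \<le> \<alpha> \<and> \<alpha> < 2*pi} =
     {vector [vector [-1, 0, 0],
                vector [0, cos (2*\<alpha>), sin (2*\<alpha>)],
                vector [0, sin (2*\<alpha>), - cos (2*\<alpha>)]] | \<alpha>. 0 \<le> \<alpha> \<and> \<alpha> < 2*pi}"
  proof
    show "quatP ` {(0,0,cos \<alpha>, sin \<alpha>) | \<alpha>. 0 \<le> \<alpha> \<and> \<alpha> < 2*pi} \<subseteq>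
     {vector [vector [-1, 0, 0],
                vector [0, cos (2*\<alpha>), sin (2*\<alpha>)],
                vector [0, sin (2*\<alpha>), - cos (2*\<alpha>)]] | \<alpha>. 0 \<le> \<alpha> \<and> \<alpha> < 2*pi}" using P_alpha by auto
    show "{vector [vector [-1, 0, 0],
                vector [0, cos (2*\<alpha>), sin (2*\<alpha>)],
                vector [0, sin (2*\<alpha>), - cos (2*\<alpha>)]] | \<alpha>. 0 \<le> \<alpha> \<and> \<alpha> < 2*pi} \<subseteq> quatP ` {(0,0,cos \<alpha>, sin \<alpha>) | \<alpha>. 0 \<le> \<alpha> \<and> \<alpha> < 2*pi}"
    proof
      fix M :: mat3 assume "M \<in> {vector [vector [-1, 0, 0],
                vector [0, cos (2*\<alpha>), sin (2*\<alpha>)],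
                vector [0, sin (2*\<alpha>), - cos (2*\<alpha>)]] | \<alpha>. 0 \<le> \<alpha> \<and> \<alpha> < 2*pi}"
      then obtain x where x: "M = quatP (0,0,cos x, sin x)" "0 \<le> x" "x < 2*pi" using P_alpha by auto
      then show "M \<in> quatP ` {(0,0,cos \<alpha>, sin \<alpha>) | \<alpha>. 0 \<le> \<alpha> \<and> \<alpha> < 2*pi}" by blast
    qed
  qed
  show ?thesis unfolding image_Un image_insert image_empty P_e2 C by auto
qed

lemma Qchar:
  fixes s a b :: real
  assumes s: "s > 2" and ad: "a = sqrt (1/2 + 1/s)" and bd: "b = sqrt (1/2 - 1/s)"
  shows "{(\<sigma>*a, 0, 0, \<tau>*b) | \<sigma> \<tau>. \<sigma> \<in> {1,-1} \<and> \<tau> \<in> {1,-1}} \<union>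
         {(\<sigma>*a, 0, \<tau>*b, 0) | \<sigma> \<tau>. \<sigma> \<in> {1,-1} \<and> \<tau> \<in> {1,-1}} \<union>
         {(\<sigma>*a, 0, b * cos \<alpha>, b * sin \<alpha>) | \<sigma> \<alpha>. \<sigma> \<in> {1,-1} \<and> 0 \<le> \<alpha> \<and> \<alpha> < 2*pi}
       = {(q0,q1,q2,q3). q0^2+q1^2+q2^2+q3^2 = 1 \<and> q1 = 0 \<and> s*(2*q0^2-1) = (2::real)}"
    (is "?L = ?R")
proof -
  have s0: "s > 0" using s by simp
  have "1/s < 1/2" using s by (simp add: field_simps)
  then have a2: "a^2 = 1/2 + 1/s" and b2: "b^2 = 1/2 - 1/s" and bp: "b > 0" and ap: "a \<ge> 0"
    using s0 unfolding ad bd by auto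
  have key: "s*(2*a^2-1) = 2" unfolding a2 using s0 by (simp add: field_simps)
  have ab: "a^2 + b^2 = 1" using a2 b2 by simp
  have sg: "\<sigma> \<in> {1,-1} \<Longrightarrow> (\<sigma>*x)^2 = x^2" for \<sigma> x :: real by auto
  show ?thesis
  proof (rule set_eqI)
    fix q :: "real\<times>real\<times>real\<times>real"
    obtain q0 q1 q2 q3 where q: "q = (q0,q1,q2,q3)" by (cases q) auto
    show "q \<in> ?L \<longleftrightarrow> q \<in> ?R"
    proof
      assume "q \<in> ?L"
      then consider (A) \<sigma> \<tau> where "\<sigma> \<in> {1,-1}" "\<tau> \<in> {1,-1}" "q = (\<sigma>*a, 0, 0, \<tau>*b)"
        | (B) \<sigma> \<tau> where "\<sigma> \<in> {1,-1}" "\<tau> \<in> {1,-1}" "q = (\<sigma>*a, 0, \<tau>*b, 0)"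
        | (C) \<sigma> \<alpha> where "\<sigma> \<in> {1,-1}" "q = (\<sigma>*a, 0, b * cos \<alpha>, b * sin \<alpha>)"
        by blast
      then show "q \<in> ?R"
      proof cases
        case A then show ?thesis using sg[OF A(1), of a] sg[OF A(2), of b] key ab by simp
      next
        case B then show ?thesis using sg[OF B(1), of a] sg[OF B(2), of b] key ab by simp
      next
        case C
        have "(b * cos \<alpha>)^2 + (b * sin \<alpha>)^2 = b^2 * ((cos \<alpha>)^2 + (sin \<alpha>)^2)"
          by (simp only: power_mult_distrib distrib_left)
        moreover have cs: "(cos \<alpha>)^2 + (sin \<alpha>)^2 = 1" by simp
        ultimately have "(b * cos \<alpha>)^2 + (b * sin \<alpha>)^2 = b^2" by (simp only: cs mult_1_right)
        then show ?thesis using C sg[OF C(1), of a] key ab by simp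
      qed
    next
      assume "q \<in> ?R"
      then have h: "q0^2+q1^2+q2^2+q3^2 = 1" "q1 = 0" "s*(2*q0^2-1) = 2" using q by auto
      have "s*(2*q0^2-1) = s*(2*a^2-1)" using h(3) key by simp
      then have "2*q0^2-1 = 2*a^2-1" using s0 by simp
      then have "q0^2 = a^2" by simp
      then have q0: "q0 = a \<or> q0 = -a" by (simp add: power2_eq_iff)
      obtain \<sigma> :: real where sig: "\<sigma> \<in> {1,-1}" "q0 = \<sigma>*a"
      proof (cases "q0 = a")
        case True then show ?thesis using that[of 1] by simp
      next
        case False then show ?thesis using that[of "-1"] q0 by simp
      qed
      have "q2^2 + q3^2 = b^2" using h ab \<open>q0^2 = a^2\<close> by simp
      then have "(q2/b)^2 + (q3/b)^2 = 1" using bp by (simp add: power_divide field_simps)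
      then obtain t where t: "0 \<le> t" "t < 2*pi" "q2/b = cos t" "q3/b = sin t"
        using sincos_total_2pi by metis
      have "q2 = b * cos t" "q3 = b * sin t" using t bp by (auto simp: field_simps)
      then show "q \<in> ?L" using q h sig t by blast
    qed
  qed
qed

theorem mainTheorem11:
  fixes l1 l2 :: real
  assumes "l1 > l2" and "l2 > 0"
  shows
   "(argmax_on S3 (\<lambda>q. W10 (diag3 l1 l2 l2) (quatP q)) =
       {(0,0,1,0), (0,0,-1,0), (0,0,0,1), (0,0,0,-1)} \<union>
       {(0,0,cos \<alpha>, sin \<alpha>) | \<alpha>. 0 \<le> \<alpha> \<and> \<alpha> < 2*pi}
     \<and> argmax_on SO3 (W10 (diag3 l1 l2 l2)) =
       {diag3 (-1) 1 (-1), diag3 (-1) (-1) 1} \<union>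
       {vector [vector [-1, 0, 0],
                vector [0, cos (2*\<alpha>), sin (2*\<alpha>)],
                vector [0, sin (2*\<alpha>), - cos (2*\<alpha>)]] | \<alpha>. 0 \<le> \<alpha> \<and> \<alpha> < 2*pi})
    \<and> (l1 + l2 > 2 \<longrightarrow>
       (let s = l1 + l2; a = sqrt (1/2 + 1/s); b = sqrt (1/2 - 1/s);
            Q = {(\<sigma>*a, 0, 0, \<tau>*b) | \<sigma> \<tau>. \<sigma> \<in> {1,-1} \<and> \<tau> \<in> {1,-1}} \<union>
                {(\<sigma>*a, 0, \<tau>*b, 0) | \<sigma> \<tau>. \<sigma> \<in> {1,-1} \<and> \<tau> \<in> {1,-1}} \<union>
                {(\<sigma>*a, 0, b * cos \<alpha>, b * sin \<alpha>) | \<sigma> \<alpha>. \<sigma> \<in> {1,-1} \<and> 0 \<le> \<alpha> \<and> \<alpha> < 2*pi}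
        in argmin_on S3 (\<lambda>q. W10 (diag3 l1 l2 l2) (quatP q)) = Q
           \<and> argmin_on SO3 (W10 (diag3 l1 l2 l2)) = quatP ` Q
           \<and> (\<forall>R\<in>argmin_on SO3 (W10 (diag3 l1 l2 l2)).
                W10 (diag3 l1 l2 l2) R = (l2 - 1)^2 + (1/2) * (l1 - l2)^2)))
    \<and> (l1 + l2 \<le> 2 \<longrightarrow>
         argmin_on S3 (\<lambda>q. W10 (diag3 l1 l2 l2) (quatP q)) = {(1,0,0,0), (-1,0,0,0)}
       \<and> argmin_on SO3 (W10 (diag3 l1 l2 l2)) = {mat 1})"
proof -
  note l = assms
  define G where "G = (\<lambda>q. W10 (diag3 l1 l2 l2) (quatP q))"
  have AM: "argmax_on S3 G =
       {(0,0,1,0), (0,0,-1,0), (0,0,0,1), (0,0,0,-1)} \<union>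
       {(0,0,cos \<alpha>, sin \<alpha>) | \<alpha>. 0 \<le> \<alpha> \<and> \<alpha> < 2*pi}"
    unfolding G_def argmax_S3[OF l] circle_set ..
  have P1: "argmax_on S3 (\<lambda>q. W10 (diag3 l1 l2 l2) (quatP q)) =
       {(0,0,1,0), (0,0,-1,0), (0,0,0,1), (0,0,0,-1)} \<union>
       {(0,0,cos \<alpha>, sin \<alpha>) | \<alpha>. 0 \<le> \<alpha> \<and> \<alpha> < 2*pi}"
    using AM unfolding G_def .
  have P2: "argmax_on SO3 (W10 (diag3 l1 l2 l2)) =
       {diag3 (-1) 1 (-1), diag3 (-1) (-1) 1} \<union>
       {vector [vector [-1, 0, 0],
                vector [0, cos (2*\<alpha>), sin (2*\<alpha>)],
                vector [0, sin (2*\<alpha>), - cos (2*\<alpha>)]] | \<alpha>. 0 \<le> \<alpha> \<and> \<alpha> < 2*pi}"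
    unfolding argmax_transfer[OF quatP_image] P1 circle_image ..
  have P3: "l1 + l2 > 2 \<longrightarrow>
       (let s = l1 + l2; a = sqrt (1/2 + 1/s); b = sqrt (1/2 - 1/s);
            Q = {(\<sigma>*a, 0, 0, \<tau>*b) | \<sigma> \<tau>. \<sigma> \<in> {1,-1} \<and> \<tau> \<in> {1,-1}} \<union>
                {(\<sigma>*a, 0, \<tau>*b, 0) | \<sigma> \<tau>. \<sigma> \<in> {1,-1} \<and> \<tau> \<in> {1,-1}} \<union>
                {(\<sigma>*a, 0, b * cos \<alpha>, b * sin \<alpha>) | \<sigma> \<alpha>. \<sigma> \<in> {1,-1} \<and> 0 \<le> \<alpha> \<and> \<alpha> < 2*pi}
        in argmin_on S3 (\<lambda>q. W10 (diag3 l1 l2 l2) (quatP q)) = Q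
           \<and> argmin_on SO3 (W10 (diag3 l1 l2 l2)) = quatP ` Q
           \<and> (\<forall>R\<in>argmin_on SO3 (W10 (diag3 l1 l2 l2)).
                W10 (diag3 l1 l2 l2) R = (l2 - 1)^2 + (1/2) * (l1 - l2)^2))"
  proof
    assume s2: "l1 + l2 > 2"
    define s where "s = l1 + l2"
    define a where "a = sqrt (1/2 + 1/s)"
    define b where "b = sqrt (1/2 - 1/s)"
    define Q :: "(real\<times>real\<times>real\<times>real) set" where "Q = {(\<sigma>*a, 0, 0, \<tau>*b) | \<sigma> \<tau>. \<sigma> \<in> {1,-1} \<and> \<tau> \<in> {1,-1}} \<union>
                {(\<sigma>*a, 0, \<tau>*b, 0) | \<sigma> \<tau>. \<sigma> \<in> {1,-1} \<and> \<tau> \<in> {1,-1}} \<union>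
                {(\<sigma>*a, 0, b * cos \<alpha>, b * sin \<alpha>) | \<sigma> \<alpha>. \<sigma> \<in> {1,-1} \<and> (0::real) \<le> \<alpha> \<and> \<alpha> < 2*pi}"
    have s: "s > 2" using s2 s_def by simp
    have QC: "Q = {(q0,q1,q2,q3). q0^2+q1^2+q2^2+q3^2 = 1 \<and> q1 = 0 \<and> s*(2*q0^2-1) = (2::real)}"
      unfolding Q_def by (rule Qchar[OF s a_def b_def])
    define m where "m = (l2-1)^2 + (l1-l2)^2/2"
    have x0: "(a,0,b,0) \<in> Q" unfolding Q_def by force
    then have x0S: "(a,0,b,0) \<in> S3" and x0G: "G (a,0,b,0) = m"
      unfolding QC S3_iff G_def m_def using Gmin_ge(2)[OF l] s_def by auto
    have lb: "\<forall>y\<in>S3. m \<le> G y"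
    proof
      fix y :: "real\<times>real\<times>real\<times>real" assume "y \<in> S3"
      then obtain q0 q1 q2 q3 where y: "y = (q0,q1,q2,q3)" "q0^2+q1^2+q2^2+q3^2 = 1"
        unfolding S3_def by auto
      then show "m \<le> G y" unfolding G_def m_def using Gmin_ge(1)[OF l] by auto
    qed
    have AS: "argmin_on S3 G = Q"
    proof -
      have "argmin_on S3 G = {x\<in>S3. G x = m}" by (rule argmin_char[OF lb x0S x0G])
      also have "\<dots> = Q"
      proof (rule set_eqI)
        fix y :: "real\<times>real\<times>real\<times>real"
        obtain q0 q1 q2 q3 where y: "y = (q0,q1,q2,q3)" by (cases y) auto
        show "y \<in> {x\<in>S3. G x = m} \<longleftrightarrow> y \<in> Q"
          unfolding QC y G_def m_def using Gmin_ge(2)[OF l, of q0 q1 q2 q3] s_def by (auto simp: S3_iff)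
      qed
      finally show ?thesis .
    qed
    have AR: "argmin_on SO3 (W10 (diag3 l1 l2 l2)) = quatP ` Q"
      using argmin_transfer[OF quatP_image, of "W10 (diag3 l1 l2 l2)"] AS unfolding G_def by simp
    have VV: "\<forall>R\<in>argmin_on SO3 (W10 (diag3 l1 l2 l2)).
                W10 (diag3 l1 l2 l2) R = (l2 - 1)^2 + (1/2) * (l1 - l2)^2"
    proof
      fix R assume "R \<in> argmin_on SO3 (W10 (diag3 l1 l2 l2))"
      then obtain q where q: "q \<in> argmin_on S3 G" "R = quatP q" unfolding AR AS by auto
      have "G q = m" using q(1) unfolding argmin_char[OF lb x0S x0G] by auto
      then show "W10 (diag3 l1 l2 l2) R = (l2 - 1)^2 + (1/2) * (l1 - l2)^2"
        using q(2) unfolding G_def m_def by simp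
    qed
    show "let s = l1 + l2; a = sqrt (1/2 + 1/s); b = sqrt (1/2 - 1/s);
            Q = {(\<sigma>*a, 0, 0, \<tau>*b) | \<sigma> \<tau>. \<sigma> \<in> {1,-1} \<and> \<tau> \<in> {1,-1}} \<union>
                {(\<sigma>*a, 0, \<tau>*b, 0) | \<sigma> \<tau>. \<sigma> \<in> {1,-1} \<and> \<tau> \<in> {1,-1}} \<union>
                {(\<sigma>*a, 0, b * cos \<alpha>, b * sin \<alpha>) | \<sigma> \<alpha>. \<sigma> \<in> {1,-1} \<and> 0 \<le> \<alpha> \<and> \<alpha> < 2*pi}
        in argmin_on S3 (\<lambda>q. W10 (diag3 l1 l2 l2) (quatP q)) = Q
           \<and> argmin_on SO3 (W10 (diag3 l1 l2 l2)) = quatP ` Q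
           \<and> (\<forall>R\<in>argmin_on SO3 (W10 (diag3 l1 l2 l2)).
                W10 (diag3 l1 l2 l2) R = (l2 - 1)^2 + (1/2) * (l1 - l2)^2)"
      unfolding Let_def s_def[symmetric] a_def[symmetric] b_def[symmetric] Q_def[symmetric]
      using AS AR VV unfolding G_def by blast
  qed
  have P4: "l1 + l2 \<le> 2 \<longrightarrow>
         argmin_on S3 (\<lambda>q. W10 (diag3 l1 l2 l2) (quatP q)) = {(1,0,0,0), (-1,0,0,0)}
       \<and> argmin_on SO3 (W10 (diag3 l1 l2 l2)) = {mat 1}"
  proof
    assume s2: "l1 + l2 \<le> 2"
    define m where "m = (l1+l2-2)^2/2 + (l2-1)^2 + (l1-l2)^2/2"
    have x0S: "(1,0,0,0) \<in> S3" unfolding S3_iff by simp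
    have x0G: "G (1,0,0,0) = m" unfolding G_def m_def using Gmin2_ge(2)[OF l _ s2, of 1 0 0 0] by simp
    have lb: "\<forall>y\<in>S3. m \<le> G y"
    proof
      fix y :: "real\<times>real\<times>real\<times>real" assume "y \<in> S3"
      then obtain q0 q1 q2 q3 where y: "y = (q0,q1,q2,q3)" "q0^2+q1^2+q2^2+q3^2 = 1"
        unfolding S3_def by auto
      then show "m \<le> G y" unfolding G_def m_def using Gmin2_ge(1)[OF l _ s2] by auto
    qed
    have AS: "argmin_on S3 G = {(1,0,0,0), (-1,0,0,0)}"
    proof -
      have "argmin_on S3 G = {x\<in>S3. G x = m}" by (rule argmin_char[OF lb x0S x0G])
      also have "\<dots> = {(1,0,0,0), (-1,0,0,0)}"
      proof (rule set_eqI)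
        fix y :: "real\<times>real\<times>real\<times>real"
        obtain q0 q1 q2 q3 where y: "y = (q0,q1,q2,q3)" by (cases y) auto
        have "q0^2 = 1 \<longleftrightarrow> q0 = 1 \<or> q0 = -1" by (metis power2_eq_iff power_one)
        then show "y \<in> {x\<in>S3. G x = m} \<longleftrightarrow> y \<in> {(1,0,0,0), (-1,0,0,0)}"
          unfolding y G_def m_def using Gmin2_ge(2)[OF l _ s2, of q0 q1 q2 q3] by (auto simp: S3_iff)
      qed
      finally show ?thesis .
    qed
    show "argmin_on S3 (\<lambda>q. W10 (diag3 l1 l2 l2) (quatP q)) = {(1,0,0,0), (-1,0,0,0)}
       \<and> argmin_on SO3 (W10 (diag3 l1 l2 l2)) = {mat 1}"
      using AS argmin_transfer[OF quatP_image, of "W10 (diag3 l1 l2 l2)"] P_one unfolding G_def by simp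
  qed
  show ?thesis using P1 P2 P3 P4 by blast
qed

end
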